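(* Let $N\ge1$ and let $W$ be the unitary on $\mathbb{C}^2\otimes\mathbb{C}^N$ given by the product (applied right to left) $$W=(H\otimes I_N)\,\check F_N^{2}\,(R\otimes I_N)\,\check F_N^{2}\,(I_2\otimes F_N)\,(H\otimes I_N),$$ where $\check F_N^2=I_N\oplus F_N^2$ is $F_N^2$ applied to the second register conditioned on the first (ancilla) qubit being $1$. Then for every vector $v\in\mathbb{C}^N$, $W(|0\rangle\otimes v)=|0\rangle\otimes A_N v$.
   Context: $F_N=\frac1{\sqrt N}[\omega^{jk}]_{j,k=0,\dots,N-1}$ with $\omega=e^{2\pi i/N}$ is the unitary discrete Fourier transform. The discrete Hartley transform is $A_N=\frac1{\sqrt N}[\mathrm{cas}(2\pi jk/N)]_{j,k=0,\dots,N-1}$ where $\mathrm{cas}(t)=\cos t+\sin t$. $H=\frac1{\sqrt2}\begin{pmatrix}1&1\\1&-1\end{pmatrix}$, $R=\frac12\begin{pmatrix}1-i&1+i\\1+i&1-i\end{pmatrix}$, $I_N$ the identity; $I_N\oplus F_N^2$ is block-diagonal in the basis $|0\rangle\otimes e_k,\ |1\rangle\otimes e_k$. *)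

theory Defs
  imports Complex_Main "Jordan_Normal_Form.Matrix"
begin

(* Kronecker (tensor) product; basis of C^a (x) C^b ordered as index i*b + k for e_i (x) e_k *)
definition kron :: "'a::times mat \<Rightarrow> 'a mat \<Rightarrow> 'a mat" where
  "kron A B = mat (dim_row A * dim_row B) (dim_col A * dim_col B)
     (\<lambda>(i,j). A $$ (i div dim_row B, j div dim_col B) * B $$ (i mod dim_row B, j mod dim_col B))"

definition omega :: "nat \<Rightarrow> complex" where
  "omega N = cis (2 * pi / real N)"

definition DFT :: "nat \<Rightarrow> complex mat" where
  "DFT N = mat N N (\<lambda>(j,k). omega N ^ (j * k) / complex_of_real (sqrt (real N)))"

definition cas :: "real \<Rightarrow> real" where
  "cas t = cos t + sin t"

definition DHT :: "nat \<Rightarrow> complex mat" where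
  "DHT N = mat N N (\<lambda>(j,k). complex_of_real (cas (2 * pi * real j * real k / real N) / sqrt (real N)))"

definition Hgate :: "complex mat" where
  "Hgate = mat_of_rows_list 2 [[1 / complex_of_real (sqrt 2), 1 / complex_of_real (sqrt 2)],
                               [1 / complex_of_real (sqrt 2), - 1 / complex_of_real (sqrt 2)]]"

definition Rgate :: "complex mat" where
  "Rgate = mat_of_rows_list 2 [[(1 - \<i>) / 2, (1 + \<i>) / 2],
                               [(1 + \<i>) / 2, (1 - \<i>) / 2]]"

definition ctrlF2 :: "nat \<Rightarrow> complex mat" where
  "ctrlF2 N = four_block_mat (1\<^sub>m N) (0\<^sub>m N N) (0\<^sub>m N N) (DFT N * DFT N)"

definition Wcirc :: "nat \<Rightarrow> complex mat" where
  "Wcirc N = kron Hgate (1\<^sub>m N) * ctrlF2 N * kron Rgate (1\<^sub>m N) * ctrlF2 N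
             * kron (1\<^sub>m 2) (DFT N) * kron Hgate (1\<^sub>m N)"

end

theory Submission
  imports Defs
begin

lemma omega_pow: "omega N ^ n = cis (2 * pi * real n / real N)"
  unfolding omega_def DeMoivre by (simp add: field_simps)

lemma omega_N: "N \<ge> 1 \<Longrightarrow> omega N ^ N = 1"
  unfolding omega_pow by simp

lemma omega_pow_mod: "N \<ge> 1 \<Longrightarrow> omega N ^ n = omega N ^ (n mod N)"
proof -
  assume N: "N \<ge> 1"
  have "omega N ^ n = omega N ^ (N * (n div N) + n mod N)" by simp
  also have "\<dots> = omega N ^ (n mod N)" unfolding power_add power_mult omega_N[OF N] by simp
  finally show ?thesis .
qed

lemma omega_pow_ne1: assumes N: "N \<ge> 1" and nd: "\<not> N dvd n" shows "omega N ^ n \<noteq> 1"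
proof
  assume h: "omega N ^ n = 1"
  define r where "r = n mod N"
  have r0: "0 < r" using nd unfolding r_def by (simp add: dvd_eq_mod_eq_0)
  have rN: "r < N" using N unfolding r_def by simp
  have "cis (2 * pi * real r / real N) = 1" using h omega_pow_mod[OF N, of n] unfolding omega_pow r_def by simp
  then have "cos (2 * pi * real r / real N) = 1" by (metis cis.sel(1) one_complex.sel(1))
  then obtain z :: int where z: "2 * pi * real r / real N = real_of_int z * 2 * pi" using cos_one_2pi_int by blast
  have "2 * pi * (real r / real N) = 2 * pi * real_of_int z" using z by (simp add: algebra_simps)
  then have e: "real r / real N = real_of_int z" using pi_gt_zero by (metis mult_cancel_left mult_eq_0_iff pi_neq_zero zero_neq_numeral)
  have "0 < real r / real N" "real r / real N < 1" using r0 rN by auto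
  then have "0 < z" "z < 1" unfolding e by auto
  then show False by simp
qed

lemma sum_roots: assumes N: "N \<ge> 1"
  shows "(\<Sum>l<N. omega N ^ (m * l)) = (if N dvd m then of_nat N else 0)"
proof (cases "N dvd m")
  case True
  then obtain c where m: "m = N * c" by blast
  have "omega N ^ (m * l) = 1" for l unfolding m power_mult omega_N[OF N] by simp
  then show ?thesis using True by simp
next
  case False
  have "(\<Sum>l<N. omega N ^ (m * l)) = (\<Sum>l<N. (omega N ^ m) ^ l)" by (simp add: power_mult)
  also have "\<dots> = ((omega N ^ m) ^ N - 1) / (omega N ^ m - 1)"
    using geometric_sum[OF omega_pow_ne1[OF N False]] .
  also have "(omega N ^ m) ^ N = 1" by (metis omega_N[OF N] power_mult power_mult_distrib mult.commute power_one)
  finally show ?thesis using False by simp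
qed

lemma DFT_carrier[simp]: "DFT N \<in> carrier_mat N N" unfolding DFT_def by simp
lemma DFT_dim[simp]: "dim_row (DFT N) = N" "dim_col (DFT N) = N" unfolding DFT_def by simp_all

lemma DFT_mult_vec: "x \<in> carrier_vec N \<Longrightarrow>
  DFT N *\<^sub>v x = vec N (\<lambda>j. \<Sum>k<N. omega N ^ (j * k) / complex_of_real (sqrt (real N)) * x $ k)"
  by (rule eq_vecI) (auto simp: DFT_def mult_mat_vec_def scalar_prod_def lessThan_atLeast0)

lemma dvd_iff_idx: fixes j k N :: nat assumes "j < N" "k < N" shows "N dvd (j + k) \<longleftrightarrow> k = (N - j) mod N"
proof
  assume "N dvd (j + k)"
  then obtain c where c: "j + k = N * c" by blast
  have "c < 2" using c assms by (metis add_strict_mono mult_2_right mult_less_cancel1 not_less_eq nat_less_le zero_less_iff_neq_zero mult.commute less_nat_zero_code)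
  then have "c = 0 \<or> c = 1" by auto
  then show "k = (N - j) mod N" using c assms by auto
next
  assume "k = (N - j) mod N"
  then show "N dvd (j + k)" using assms
    by (cases "j = 0") (auto simp: mod_if)
qed

lemma F2: assumes N: "N \<ge> 1" and x: "x \<in> carrier_vec N"
  shows "(DFT N * DFT N) *\<^sub>v x = vec N (\<lambda>j. x $ ((N - j) mod N))"
proof (rule eq_vecI)
  fix j assume "j < dim_vec (vec N (\<lambda>j. x $ ((N - j) mod N)))"
  then have j: "j < N" by simp
  define s where "s = complex_of_real (sqrt (real N))"
  have ss: "s * s = of_nat N" unfolding s_def
    by (metis of_real_mult of_real_of_nat_eq real_sqrt_mult_self of_nat_0_le_iff real_sqrt_pow2 power2_eq_square)
  have s0: "s \<noteq> 0" using N unfolding s_def by simp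
  have "((DFT N * DFT N) *\<^sub>v x) $ j = (DFT N *\<^sub>v (DFT N *\<^sub>v x)) $ j"
    using x by (subst assoc_mult_mat_vec[of _ N N _ N]) auto
  also have "\<dots> = (\<Sum>l<N. omega N ^ (j * l) / s * (\<Sum>k<N. omega N ^ (l * k) / s * x $ k))"
    using x j by (simp add: DFT_mult_vec s_def)
  also have "\<dots> = (\<Sum>l<N. \<Sum>k<N. omega N ^ ((j + k) * l) / (s * s) * x $ k)"
    by (simp add: sum_distrib_left power_add add_mult_distrib mult.commute mult.left_commute add_mult_distrib2)
  also have "\<dots> = (\<Sum>k<N. \<Sum>l<N. omega N ^ ((j + k) * l) / (s * s) * x $ k)"
    by (rule sum.swap)
  also have "\<dots> = (\<Sum>k<N. x $ k * (\<Sum>l<N. omega N ^ ((j + k) * l)) / (s * s))"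
    by (simp add: sum_distrib_left sum_divide_distrib mult.commute)
  also have "\<dots> = (\<Sum>k<N. if k = (N - j) mod N then x $ k else 0)"
    using N j ss by (intro sum.cong refl) (auto simp: sum_roots dvd_iff_idx)
  also have "\<dots> = x $ ((N - j) mod N)" using N by simp
  finally show "((DFT N * DFT N) *\<^sub>v x) $ j = vec N (\<lambda>j. x $ ((N - j) mod N)) $ j" using j by simp
qed (simp)

lemma DHT_carrier[simp]: "DHT N \<in> carrier_mat N N" unfolding DHT_def by simp
lemma DHT_dim[simp]: "dim_row (DHT N) = N" "dim_col (DHT N) = N" unfolding DHT_def by simp_all

lemma cas_combo: "(1 - \<i>) / 2 * cis t + (1 + \<i>) / 2 * cis (- t) = complex_of_real (cas t)"
  by (simp add: complex_eq_iff cas_def field_simps)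

lemma omega_neg: assumes N: "N \<ge> 1" and j: "j < N"
  shows "omega N ^ (((N - j) mod N) * k) = cis (- (2 * pi * real (j * k) / real N))"
proof -
  have "N dvd (j + (N - j) mod N)" using dvd_iff_idx[of j N "(N - j) mod N"] j N by auto
  then obtain c where c: "j + (N - j) mod N = N * c" by blast
  have "omega N ^ (((N - j) mod N) * k) * omega N ^ (j * k) = omega N ^ ((j + (N - j) mod N) * k)"
    by (simp add: power_add add_mult_distrib)
  also have "\<dots> = 1" unfolding c by (simp add: power_mult omega_N[OF N] mult.assoc)
  finally have "omega N ^ (((N - j) mod N) * k) = inverse (omega N ^ (j * k))"
    by (metis inverse_unique mult.commute)
  then show ?thesis by (simp add: omega_pow cis_inverse)
qed

lemma final_comb: assumes N: "N \<ge> 1" and v: "v \<in> carrier_vec N"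
  shows "((1 - \<i>) / 2) \<cdot>\<^sub>v (DFT N *\<^sub>v v) + ((1 + \<i>) / 2) \<cdot>\<^sub>v vec N (\<lambda>j. (DFT N *\<^sub>v v) $ ((N - j) mod N))
     = DHT N *\<^sub>v v"
proof (rule eq_vecI)
  fix j assume "j < dim_vec (DHT N *\<^sub>v v)"
  then have j: "j < N" by simp
  define s where "s = complex_of_real (sqrt (real N))"
  have jN: "(N - j) mod N < N" using N by simp
  have s0: "s \<noteq> 0" using N unfolding s_def by simp
  have "(((1 - \<i>) / 2) \<cdot>\<^sub>v (DFT N *\<^sub>v v) + ((1 + \<i>) / 2) \<cdot>\<^sub>v vec N (\<lambda>j. (DFT N *\<^sub>v v) $ ((N - j) mod N))) $ j
     = (1 - \<i>) / 2 * (\<Sum>k<N. omega N ^ (j * k) / s * v $ k)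
       + (1 + \<i>) / 2 * (\<Sum>k<N. omega N ^ (((N - j) mod N) * k) / s * v $ k)"
    using j jN v by (simp add: DFT_mult_vec s_def)
  also have "\<dots> = (1 - \<i>) / 2 * (\<Sum>k<N. cis (2 * pi * real (j * k) / real N) / s * v $ k)
       + (1 + \<i>) / 2 * (\<Sum>k<N. cis (- (2 * pi * real (j * k) / real N)) / s * v $ k)"
    by (simp only: omega_neg[OF N j]) (simp only: omega_pow)
  also have "\<dots> = (\<Sum>k<N. (1 - \<i>) / 2 * (cis (2 * pi * real (j * k) / real N) / s * v $ k)
       + (1 + \<i>) / 2 * (cis (- (2 * pi * real (j * k) / real N)) / s * v $ k))"
    by (simp add: sum.distrib sum_distrib_left)
  also have "\<dots> = (\<Sum>k<N. ((1 - \<i>) / 2 * cis (2 * pi * real (j * k) / real N)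
       + (1 + \<i>) / 2 * cis (- (2 * pi * real (j * k) / real N))) / s * v $ k)"
    by (rule sum.cong[OF refl]) (simp add: s0 field_simps)
  also have "\<dots> = (\<Sum>k<N. complex_of_real (cas (2 * pi * real j * real k / real N) / sqrt (real N)) * v $ k)"
    unfolding cas_combo s_def of_nat_mult by (simp add: mult.assoc)
  also have "\<dots> = (DHT N *\<^sub>v v) $ j"
    using j v by (simp add: DHT_def mult_mat_vec_def scalar_prod_def lessThan_atLeast0)
  finally show "(((1 - \<i>) / 2) \<cdot>\<^sub>v (DFT N *\<^sub>v v) + ((1 + \<i>) / 2) \<cdot>\<^sub>v vec N (\<lambda>j. (DFT N *\<^sub>v v) $ ((N - j) mod N))) $ j = (DHT N *\<^sub>v v) $ j" .
qed (simp)

lemma divmod_hi: fixes i N :: nat assumes "N \<le> i" "i < N + N" shows "i div N = 1" "i mod N = i - N"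
  using assms by (auto simp: le_div_geq le_mod_geq)

lemma kron_block: assumes A: "A \<in> carrier_mat 2 2" and B: "B \<in> carrier_mat N N"
  shows "kron A B = four_block_mat (A $$ (0,0) \<cdot>\<^sub>m B) (A $$ (0,1) \<cdot>\<^sub>m B) (A $$ (1,0) \<cdot>\<^sub>m B) (A $$ (1,1) \<cdot>\<^sub>m B)"
proof (rule eq_matI)
  fix i j assume i: "i < dim_row (four_block_mat (A $$ (0,0) \<cdot>\<^sub>m B) (A $$ (0,1) \<cdot>\<^sub>m B) (A $$ (1,0) \<cdot>\<^sub>m B) (A $$ (1,1) \<cdot>\<^sub>m B))"
    and j: "j < dim_col (four_block_mat (A $$ (0,0) \<cdot>\<^sub>m B) (A $$ (0,1) \<cdot>\<^sub>m B) (A $$ (1,0) \<cdot>\<^sub>m B) (A $$ (1,1) \<cdot>\<^sub>m B))"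
  then have i: "i < N + N" and j: "j < N + N" using B by auto
  show "kron A B $$ (i, j) = four_block_mat (A $$ (0,0) \<cdot>\<^sub>m B) (A $$ (0,1) \<cdot>\<^sub>m B) (A $$ (1,0) \<cdot>\<^sub>m B) (A $$ (1,1) \<cdot>\<^sub>m B) $$ (i, j)"
    using A B i j by (cases "i < N"; cases "j < N") (auto simp: kron_def divmod_hi)
qed (insert A B, auto simp: kron_def)

lemma smult_one_mult_vec: "x \<in> carrier_vec N \<Longrightarrow> ((c::complex) \<cdot>\<^sub>m 1\<^sub>m N) *\<^sub>v x = c \<cdot>\<^sub>v x"
  by (rule eq_vecI) (auto simp: mult_mat_vec_def scalar_prod_def if_distrib if_distribR cong: if_cong)

lemma kron2: fixes A :: "complex mat" assumes A: "A \<in> carrier_mat 2 2" and x: "x \<in> carrier_vec N" and y: "y \<in> carrier_vec N"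
  shows "kron A (1\<^sub>m N) *\<^sub>v (x @\<^sub>v y) = (A $$ (0,0) \<cdot>\<^sub>v x + A $$ (0,1) \<cdot>\<^sub>v y) @\<^sub>v (A $$ (1,0) \<cdot>\<^sub>v x + A $$ (1,1) \<cdot>\<^sub>v y)"
  unfolding kron_block[OF A one_carrier_mat]
  by (subst four_block_mat_mult_vec[of _ N N _ N _ N]) (use x y in \<open>auto simp: smult_one_mult_vec\<close>)

lemma smult_mat_mult_vec': "A \<in> carrier_mat n m \<Longrightarrow> x \<in> carrier_vec m \<Longrightarrow> ((c::complex) \<cdot>\<^sub>m A) *\<^sub>v x = c \<cdot>\<^sub>v (A *\<^sub>v x)"
  by (rule eq_vecI) (auto simp: mult_mat_vec_def scalar_prod_def sum_distrib_left mult.assoc)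

lemma kronF: assumes x: "x \<in> carrier_vec N" and y: "y \<in> carrier_vec N"
  shows "kron (1\<^sub>m 2) (DFT N) *\<^sub>v (x @\<^sub>v y) = (DFT N *\<^sub>v x) @\<^sub>v (DFT N *\<^sub>v y)"
  unfolding kron_block[OF one_carrier_mat DFT_carrier]
  by (subst four_block_mat_mult_vec[of _ N N _ N _ N]) (use x y in \<open>auto simp: smult_mat_mult_vec'\<close>)

lemma ctrl: assumes N: "N \<ge> 1" and x: "x \<in> carrier_vec N" and y: "y \<in> carrier_vec N"
  shows "ctrlF2 N *\<^sub>v (x @\<^sub>v y) = x @\<^sub>v vec N (\<lambda>j. y $ ((N - j) mod N))"
  unfolding ctrlF2_def
  by (subst mult_mat_vec_split[of _ N _ N]) (use x y N in \<open>auto simp: F2\<close>)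

lemma Hgate_carrier: "Hgate \<in> carrier_mat 2 2" unfolding Hgate_def by (simp add: mat_of_rows_list_def del: One_nat_def) (simp add: numeral_2_eq_2)
lemma Rgate_carrier: "Rgate \<in> carrier_mat 2 2" unfolding Rgate_def by (simp add: mat_of_rows_list_def del: One_nat_def) (simp add: numeral_2_eq_2)
lemma Hgate_idx: "Hgate $$ (0,0) = 1 / complex_of_real (sqrt 2)" "Hgate $$ (0,1) = 1 / complex_of_real (sqrt 2)"
  "Hgate $$ (1,0) = 1 / complex_of_real (sqrt 2)" "Hgate $$ (1,1) = - 1 / complex_of_real (sqrt 2)"
  unfolding Hgate_def by (simp_all add: mat_of_rows_list_def)
lemma Rgate_idx: "Rgate $$ (0,0) = (1 - \<i>) / 2" "Rgate $$ (0,1) = (1 + \<i>) / 2"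
  "Rgate $$ (1,0) = (1 + \<i>) / 2" "Rgate $$ (1,1) = (1 - \<i>) / 2"
  unfolding Rgate_def by (simp_all add: mat_of_rows_list_def)

lemma smult_zero_vec'[simp]: "(k::complex) \<cdot>\<^sub>v 0\<^sub>v n = 0\<^sub>v n" by (rule eq_vecI) auto

lemma kron_carrier: assumes "A \<in> carrier_mat 2 2" "B \<in> carrier_mat N N"
  shows "kron A B \<in> carrier_mat (N + N) (N + N)"
proof -
  have "dim_row A = 2" "dim_col A = 2" "dim_row B = N" "dim_col B = N" using assms by auto
  then have "dim_row (kron A B) = 2 * N" "dim_col (kron A B) = 2 * N" unfolding kron_def by simp_all
  then show ?thesis by (intro carrier_matI) simp_all
qed

theorem mainTheorem6:
  fixes N :: nat and v :: "complex vec"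
  assumes "N \<ge> 1" and "v \<in> carrier_vec N"
  shows "Wcirc N *\<^sub>v (v @\<^sub>v 0\<^sub>v N) = (DHT N *\<^sub>v v) @\<^sub>v 0\<^sub>v N"
proof -
  note N = assms(1) and v = assms(2)
  define c where "c = 1 / complex_of_real (sqrt 2)"
  define a where "a = (1 - \<i>) / (2::complex)"
  define b where "b = (1 + \<i>) / (2::complex)"
  define P where "P = (\<lambda>w :: complex vec. vec N (\<lambda>j. w $ ((N - j) mod N)))"
  define u where "u = DFT N *\<^sub>v v"
  define w where "w = a \<cdot>\<^sub>v (c \<cdot>\<^sub>v u) + b \<cdot>\<^sub>v (c \<cdot>\<^sub>v P u)"
  have u: "u \<in> carrier_vec N" using v unfolding u_def by (rule mult_mat_vec_carrier[OF DFT_carrier])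
  have Pc: "P x \<in> carrier_vec N" for x unfolding P_def by simp
  have PP: "P (P x) = x" if "x \<in> carrier_vec N" for x
  proof (rule eq_vecI)
    fix j assume "j < dim_vec x" then have j: "j < N" using that by simp
    have "(N - (N - j) mod N) mod N = j" using j N
      by (cases "j = 0") (auto simp: mod_if)
    then show "P (P x) $ j = x $ j" using j N unfolding P_def by simp
  qed (use that in \<open>simp add: P_def\<close>)
  have PL1: "P (x + y) = P x + P y" if "x \<in> carrier_vec N" "y \<in> carrier_vec N" for x y
    by (rule eq_vecI) (use that N in \<open>auto simp: P_def\<close>)
  have PL2: "P (k \<cdot>\<^sub>v x) = k \<cdot>\<^sub>v P x" if "x \<in> carrier_vec N" for x k
    by (rule eq_vecI) (use that N in \<open>auto simp: P_def\<close>)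
  note PL = PL1 PL2
  have "complex_of_real (sqrt 2) * complex_of_real (sqrt 2) = 2"
    unfolding of_real_mult[symmetric] by simp
  then have cc: "c * c = 1 / 2" unfolding c_def by (simp add: field_simps)
  have KH: "kron Hgate (1\<^sub>m N) \<in> carrier_mat (N + N) (N + N)"
    by (rule kron_carrier[OF Hgate_carrier]) simp
  have KR: "kron Rgate (1\<^sub>m N) \<in> carrier_mat (N + N) (N + N)"
    by (rule kron_carrier[OF Rgate_carrier]) simp
  have KF: "kron (1\<^sub>m 2) (DFT N) \<in> carrier_mat (N + N) (N + N)"
    by (rule kron_carrier) simp_all
  have C: "ctrlF2 N \<in> carrier_mat (N + N) (N + N)"
    unfolding ctrlF2_def by (rule four_block_carrier_mat) auto
  have x0: "v @\<^sub>v 0\<^sub>v N \<in> carrier_vec (N + N)" using v by simp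
  have W: "Wcirc N *\<^sub>v (v @\<^sub>v 0\<^sub>v N) = kron Hgate (1\<^sub>m N) *\<^sub>v (ctrlF2 N *\<^sub>v (kron Rgate (1\<^sub>m N) *\<^sub>v
      (ctrlF2 N *\<^sub>v (kron (1\<^sub>m 2) (DFT N) *\<^sub>v (kron Hgate (1\<^sub>m N) *\<^sub>v (v @\<^sub>v 0\<^sub>v N))))))"
  proof -
    let ?H = "kron Hgate (1\<^sub>m N)" and ?R = "kron Rgate (1\<^sub>m N)" and ?F = "kron (1\<^sub>m 2) (DFT N)" and ?C = "ctrlF2 N"
    have c1: "?H * ?C \<in> carrier_mat (N+N) (N+N)" using KH C by (rule mult_carrier_mat)
    have c2: "?H * ?C * ?R \<in> carrier_mat (N+N) (N+N)" using c1 KR by (rule mult_carrier_mat)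
    have c3: "?H * ?C * ?R * ?C \<in> carrier_mat (N+N) (N+N)" using c2 C by (rule mult_carrier_mat)
    have c4: "?H * ?C * ?R * ?C * ?F \<in> carrier_mat (N+N) (N+N)" using c3 KF by (rule mult_carrier_mat)
    have y1: "?H *\<^sub>v (v @\<^sub>v 0\<^sub>v N) \<in> carrier_vec (N+N)" using KH x0 by (rule mult_mat_vec_carrier)
    have y2: "?F *\<^sub>v (?H *\<^sub>v (v @\<^sub>v 0\<^sub>v N)) \<in> carrier_vec (N+N)" using KF y1 by (rule mult_mat_vec_carrier)
    have y3: "?C *\<^sub>v (?F *\<^sub>v (?H *\<^sub>v (v @\<^sub>v 0\<^sub>v N))) \<in> carrier_vec (N+N)" using C y2 by (rule mult_mat_vec_carrier)
    have y4: "?R *\<^sub>v (?C *\<^sub>v (?F *\<^sub>v (?H *\<^sub>v (v @\<^sub>v 0\<^sub>v N)))) \<in> carrier_vec (N+N)" using KR y3 by (rule mult_mat_vec_carrier)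
    show ?thesis unfolding Wcirc_def
      by (simp only: assoc_mult_mat_vec[OF c4 KH x0] assoc_mult_mat_vec[OF c3 KF y1]
        assoc_mult_mat_vec[OF c2 C y2] assoc_mult_mat_vec[OF c1 KR y3] assoc_mult_mat_vec[OF KH C y4])
  qed
  have s1: "kron Hgate (1\<^sub>m N) *\<^sub>v (v @\<^sub>v 0\<^sub>v N) = (c \<cdot>\<^sub>v v) @\<^sub>v (c \<cdot>\<^sub>v v)"
    using v by (simp add: kron2[OF Hgate_carrier] Hgate_idx Hgate_idx[unfolded One_nat_def] c_def)
  have s2: "kron (1\<^sub>m 2) (DFT N) *\<^sub>v ((c \<cdot>\<^sub>v v) @\<^sub>v (c \<cdot>\<^sub>v v)) = (c \<cdot>\<^sub>v u) @\<^sub>v (c \<cdot>\<^sub>v u)"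
    using v by (simp add: kronF u_def mult_mat_vec[of _ N N])
  have s3: "ctrlF2 N *\<^sub>v ((c \<cdot>\<^sub>v u) @\<^sub>v (c \<cdot>\<^sub>v u)) = (c \<cdot>\<^sub>v u) @\<^sub>v (c \<cdot>\<^sub>v P u)"
  proof -
    have "ctrlF2 N *\<^sub>v ((c \<cdot>\<^sub>v u) @\<^sub>v (c \<cdot>\<^sub>v u)) = (c \<cdot>\<^sub>v u) @\<^sub>v P (c \<cdot>\<^sub>v u)"
      unfolding P_def using u N by (intro ctrl) auto
    then show ?thesis using u by (simp add: PL2)
  qed
  have s4: "kron Rgate (1\<^sub>m N) *\<^sub>v ((c \<cdot>\<^sub>v u) @\<^sub>v (c \<cdot>\<^sub>v P u)) = w @\<^sub>v (b \<cdot>\<^sub>v (c \<cdot>\<^sub>v u) + a \<cdot>\<^sub>v (c \<cdot>\<^sub>v P u))"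
    using u Pc by (simp add: kron2[OF Rgate_carrier] Rgate_idx Rgate_idx[unfolded One_nat_def] w_def a_def b_def)
  have s5: "ctrlF2 N *\<^sub>v (w @\<^sub>v (b \<cdot>\<^sub>v (c \<cdot>\<^sub>v u) + a \<cdot>\<^sub>v (c \<cdot>\<^sub>v P u))) = w @\<^sub>v w"
  proof -
    have "ctrlF2 N *\<^sub>v (w @\<^sub>v (b \<cdot>\<^sub>v (c \<cdot>\<^sub>v u) + a \<cdot>\<^sub>v (c \<cdot>\<^sub>v P u)))
       = w @\<^sub>v P (b \<cdot>\<^sub>v (c \<cdot>\<^sub>v u) + a \<cdot>\<^sub>v (c \<cdot>\<^sub>v P u))"
      using u Pc N unfolding P_def w_def by (subst ctrl) auto
    also have "P (b \<cdot>\<^sub>v (c \<cdot>\<^sub>v u) + a \<cdot>\<^sub>v (c \<cdot>\<^sub>v P u)) = w"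
      using u Pc unfolding w_def by (simp add: PL PP) (rule comm_add_vec[of _ N]; simp add: Pc)
    finally show ?thesis .
  qed
  have s6: "kron Hgate (1\<^sub>m N) *\<^sub>v (w @\<^sub>v w) = (a \<cdot>\<^sub>v u + b \<cdot>\<^sub>v P u) @\<^sub>v 0\<^sub>v N"
  proof -
    have wc: "w \<in> carrier_vec N" using u Pc unfolding w_def by simp
    have "kron Hgate (1\<^sub>m N) *\<^sub>v (w @\<^sub>v w) = (c \<cdot>\<^sub>v w + c \<cdot>\<^sub>v w) @\<^sub>v (c \<cdot>\<^sub>v w + (- c) \<cdot>\<^sub>v w)"
      using wc by (simp add: kron2[OF Hgate_carrier] Hgate_idx Hgate_idx[unfolded One_nat_def] c_def)
    also have "\<dots> = (a \<cdot>\<^sub>v u + b \<cdot>\<^sub>v P u) @\<^sub>v 0\<^sub>v N"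
    proof (rule arg_cong2[where f = append_vec])
      show "c \<cdot>\<^sub>v w + c \<cdot>\<^sub>v w = a \<cdot>\<^sub>v u + b \<cdot>\<^sub>v P u"
      proof (rule eq_vecI)
        fix j assume "j < dim_vec (a \<cdot>\<^sub>v u + b \<cdot>\<^sub>v P u)" then have j: "j < N" using u by (simp add: P_def)
        have e: "(c \<cdot>\<^sub>v w + c \<cdot>\<^sub>v w) $ j = 2 * (c * c) * (a * u $ j + b * P u $ j)"
          using j u unfolding w_def by (simp add: P_def algebra_simps)
        have f: "(a \<cdot>\<^sub>v u + b \<cdot>\<^sub>v P u) $ j = a * u $ j + b * P u $ j"
          using j u by (simp add: P_def)
        show "(c \<cdot>\<^sub>v w + c \<cdot>\<^sub>v w) $ j = (a \<cdot>\<^sub>v u + b \<cdot>\<^sub>v P u) $ j"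
          unfolding e f cc by simp
      qed (use u Pc in \<open>simp add: w_def\<close>)
      show "c \<cdot>\<^sub>v w + - c \<cdot>\<^sub>v w = 0\<^sub>v N"
        using wc by (intro eq_vecI) auto
    qed
    finally show ?thesis .
  qed
  have fin: "a \<cdot>\<^sub>v u + b \<cdot>\<^sub>v P u = DHT N *\<^sub>v v"
    using final_comb[OF N v] unfolding a_def b_def u_def P_def .
  show ?thesis unfolding W s1 s2 s3 s4 s5 s6 fin ..
qed

end
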